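(* Henson's graph $U_3$ satisfies property $\mathscr{D}_3$ but does not satisfy property $\mathscr{D}_4$.
   Context: Henson's graph $U_3$ is the countable triangle-free graph (unique up to isomorphism) with the extension property: for all disjoint finite sets $A,B\subseteq V(U_3)$ with $A$ independent there is a vertex $v\notin A\cup B$ adjacent to every vertex of $A$ and to no vertex of $B$. Property $\mathscr{D}_k$: for every $m\in\{1,\dots,k\}$ and every sequence $x_1,\dots,x_{3m}$ of (not necessarily distinct) vertices there is a vertex $y$ with $|\{i\in[3m]: x_iy\in E(G)\}|\ge m+1$. *)

theory Defs
  imports Main "HOL-Library.Countable_Set"
begin

definition simple_graph :: "'a set \<Rightarrow> ('a \<Rightarrow> 'a \<Rightarrow> bool) \<Rightarrow> bool" where
  "simple_graph V E \<longleftrightarrow>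
     (\<forall>u v. E u v \<longrightarrow> u \<in> V \<and> v \<in> V) \<and>
     (\<forall>u v. E u v \<longrightarrow> E v u) \<and>
     (\<forall>v. \<not> E v v)"

definition triangle_free :: "'a set \<Rightarrow> ('a \<Rightarrow> 'a \<Rightarrow> bool) \<Rightarrow> bool" where
  "triangle_free V E \<longleftrightarrow>
     \<not> (\<exists>u\<in>V. \<exists>v\<in>V. \<exists>w\<in>V. E u v \<and> E v w \<and> E u w)"

definition independent_set :: "('a \<Rightarrow> 'a \<Rightarrow> bool) \<Rightarrow> 'a set \<Rightarrow> bool" where
  "independent_set E A \<longleftrightarrow> (\<forall>u\<in>A. \<forall>v\<in>A. \<not> E u v)"

definition henson_extension :: "'a set \<Rightarrow> ('a \<Rightarrow> 'a \<Rightarrow> bool) \<Rightarrow> bool" where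
  "henson_extension V E \<longleftrightarrow>
     (\<forall>A B. finite A \<and> finite B \<and> A \<subseteq> V \<and> B \<subseteq> V \<and> A \<inter> B = {} \<and> independent_set E A
        \<longrightarrow> (\<exists>v\<in>V. v \<notin> A \<union> B \<and> (\<forall>a\<in>A. E v a) \<and> (\<forall>b\<in>B. \<not> E v b)))"

text \<open>(V,E) is (a copy of) Henson's graph U_3: countable, triangle-free, with the extension property.
  U_3 is unique up to isomorphism, so quantifying over all such graphs is faithful.\<close>
definition is_henson_U3 :: "'a set \<Rightarrow> ('a \<Rightarrow> 'a \<Rightarrow> bool) \<Rightarrow> bool" where
  "is_henson_U3 V E \<longleftrightarrow>
     simple_graph V E \<and> countable V \<and> triangle_free V E \<and> henson_extension V E"

definition property_D :: "nat \<Rightarrow> 'a set \<Rightarrow> ('a \<Rightarrow> 'a \<Rightarrow> bool) \<Rightarrow> bool" where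
  "property_D k V E \<longleftrightarrow>
     (\<forall>m\<in>{1..k}. \<forall>x :: nat \<Rightarrow> 'a. (\<forall>i\<in>{1..3*m}. x i \<in> V) \<longrightarrow>
        (\<exists>y\<in>V. card {i\<in>{1..3*m}. E (x i) y} \<ge> m + 1))"

end

theory Submission
  imports Defs
begin

lemma comp4:
  fixes x1 x2 x3 x4 :: nat
  assumes h: "x1 \<ge> 1" "x2 \<ge> 1" "x3 \<ge> 1" "x4 \<ge> 1" "x1+x2+x3+x4 \<le> 12"
  and n1: "x1 \<noteq> 1" "x1 \<noteq> 5" and n2: "x2 \<noteq> 1" "x2 \<noteq> 5" and n3: "x3 \<noteq> 1" "x3 \<noteq> 5"
  and n4: "x4 \<noteq> 1" "x4 \<noteq> 5" and n12: "x1+x2 \<noteq> 5" and n23: "x2+x3 \<noteq> 5" and n34: "x3+x4 \<noteq> 5"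
  and n123: "x1+x2+x3 \<noteq> 8" and n234: "x2+x3+x4 \<noteq> 8" and nS: "x1+x2+x3+x4 \<noteq> 8" "x1+x2+x3+x4 \<noteq> 12"
  shows False
proof -
  have g: "x1 \<ge> 2" "x2 \<ge> 2" "x3 \<ge> 2" "x4 \<ge> 2"
    using h(1) n1(1) apply arith using h(2) n2(1) apply arith using h(3) n3(1) apply arith
    using h(4) n4(1) by arith
  have s: "x1+x2+x3+x4 \<ge> 9" "x1+x2+x3+x4 \<le> 11" using g h(5) nS by arith+
  have a1: "x1 \<le> 4" using s g n1(2) by arith
  have a4: "x4 \<le> 4" using s g n4(2) by arith
  have p: "x1+x2 = 4 \<or> x3+x4 = 4" using s g n12 n34 by arith
  show False
  proof (cases "x1+x2 = 4")
    case True
    then have e: "x1 = 2" "x2 = 2" using g by arith+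
    then have "x3 = 2" using n23 n123 n3(2) g s by arith
    then show False using e g s a4 n34 n234 by arith
  next
    case False
    then have e: "x3 = 2" "x4 = 2" using g p by arith+
    then have "x2 = 2" using n23 n234 n2(2) g s by arith
    then show False using e g s a1 n12 n123 by arith
  qed
qed

definition P13 :: "nat \<Rightarrow> nat \<Rightarrow> bool" where
  "P13 i j \<longleftrightarrow> i + 1 = j \<or> j + 1 = i \<or> i + 5 = j \<or> j + 5 = i \<or> i + 8 = j \<or> j + 8 = i \<or> i + 12 = j \<or> j + 12 = i"
lemma P_tri0: "\<not> (P13 i j \<and> P13 j k \<and> P13 i k)"
  unfolding P13_def by (intro notI; elim conjE disjE; linarith)
lemma P_tri: "\<forall>i<13. \<forall>j<13. \<forall>k<13. \<not> (P13 i j \<and> P13 j k \<and> P13 i k)"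
  using P_tri0 by blast
lemma P_sym: "\<forall>i<13. \<forall>j<13. P13 i j = P13 j i"
  unfolding P13_def by blast
lemma P_irr: "\<forall>i<13. \<not> P13 i i"
  unfolding P13_def by simp
lemma nP: assumes "\<not> P13 i j" "i < j" shows "j - i \<noteq> 1" "j - i \<noteq> 5" "j - i \<noteq> 8" "j - i \<noteq> 12"
proof -
  have "i + 1 \<noteq> j" "i + 5 \<noteq> j" "i + 8 \<noteq> j" "i + 12 \<noteq> j" using assms(1) unfolding P13_def by auto
  then show "j - i \<noteq> 1" "j - i \<noteq> 5" "j - i \<noteq> 8" "j - i \<noteq> 12" using assms(2) by auto
qed
lemma P_alpha:
  assumes o: "a < b" "b < c" "c < d" "d < e" "e < 13"
  and q: "\<not> P13 a b" "\<not> P13 a c" "\<not> P13 a d" "\<not> P13 a e" "\<not> P13 b c" "\<not> P13 b d" "\<not> P13 b e"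
    "\<not> P13 c d" "\<not> P13 c e" "\<not> P13 d e"
  shows False
proof -
  have s: "(b-a)+(c-b) = c - a" "(c-b)+(d-c) = d-b" "(d-c)+(e-d) = e-c"
    "(b-a)+(c-b)+(d-c) = d-a" "(c-b)+(d-c)+(e-d) = e-b" "(b-a)+(c-b)+(d-c)+(e-d) = e-a"
    "c - a + (d - c) = d - a" "d - b + (e - d) = e - b" "d - a + (e - d) = e - a"
    using o by auto
  have ab: "a < c" "a < d" "a < e" "b < d" "b < e" "c < e" using o by auto
  note n1 = nP[OF q(1) o(1)] and n2 = nP[OF q(5) o(2)] and n3 = nP[OF q(8) o(3)] and n4 = nP[OF q(10) o(4)]
   and n12 = nP[OF q(2) ab(1)] and n23 = nP[OF q(6) ab(4)] and n34 = nP[OF q(9) ab(6)]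
   and n123 = nP[OF q(3) ab(2)] and n234 = nP[OF q(7) ab(5)] and nS = nP[OF q(4) ab(3)]
  have h: "b-a \<ge> 1" "c-b \<ge> 1" "d-c \<ge> 1" "e-d \<ge> 1" "(b-a)+(c-b)+(d-c)+(e-d) \<le> 12" using o by auto
  show False
    by (rule comp4[OF h n1(1,2) n2(1,2) n3(1,2) n4(1,2)])
       (simp_all only: s n12(2) n23(2) n34(2) n123(3) n234(3) nS(3,4) not_False_eq_True)
qed

lemma embed:
  fixes V :: "'a set" and E :: "'a \<Rightarrow> 'a \<Rightarrow> bool" and P :: "nat \<Rightarrow> nat \<Rightarrow> bool"
  assumes sg: "simple_graph V E" and ext: "henson_extension V E"
    and Psym: "\<forall>i<N. \<forall>j<N. P i j = P j i" and Pirr: "\<forall>i<N. \<not> P i i"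
    and Ptri: "\<forall>i<N. \<forall>j<N. \<forall>k<N. \<not> (P i j \<and> P j k \<and> P i k)"
  shows "n \<le> N \<Longrightarrow> \<exists>x. (\<forall>i<n. x i \<in> V) \<and> inj_on x {..<n} \<and> (\<forall>i<n. \<forall>j<n. E (x i) (x j) \<longleftrightarrow> P i j)"
proof (induction n)
  case 0
  then show ?case by auto
next
  case (Suc n)
  then obtain x where xV: "\<forall>i<n. x i \<in> V" and xinj: "inj_on x {..<n}"
    and xE: "\<forall>i<n. \<forall>j<n. E (x i) (x j) \<longleftrightarrow> P i j" by auto
  have nN: "n < N" using Suc.prems by simp
  define A where "A = x ` {i. i<n \<and> P i n}"
  define B where "B = x ` {i. i<n \<and> \<not> P i n}"
  have AB: "A \<union> B = x ` {..<n}" unfolding A_def B_def by auto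
  have disj: "A \<inter> B = {}"
  proof -
    { fix i j assume "i<n" "j<n" "P i n" "\<not> P j n" "x i = x j"
      with xinj have False by (metis inj_onD lessThan_iff) }
    then show ?thesis unfolding A_def B_def by blast
  qed
  have indep: "independent_set E A"
    unfolding independent_set_def A_def
  proof (intro ballI)
    fix a b assume "a \<in> x ` {i. i < n \<and> P i n}" "b \<in> x ` {i. i < n \<and> P i n}"
    then obtain i j where ij: "i<n" "j<n" "P i n" "P j n" "a = x i" "b = x j" by auto
    have "i < N" "j < N" using ij nN by auto
    then have "\<not> P i j" using Ptri nN ij by blast
    then show "\<not> E a b" using xE ij by auto
  qed
  have "A \<subseteq> V" "B \<subseteq> V" unfolding A_def B_def using xV by auto
  moreover have "finite A" "finite B" unfolding A_def B_def by auto
  ultimately obtain v where v: "v \<in> V" "v \<notin> A \<union> B" "\<forall>a\<in>A. E v a" "\<forall>b\<in>B. \<not> E v b"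
    using ext[unfolded henson_extension_def, rule_format, of A B] disj indep by blast
  have Esym: "\<And>u w. E u w \<Longrightarrow> E w u" and Eirr: "\<And>u. \<not> E u u"
    using sg unfolding simple_graph_def by auto
  define x' where "x' = x(n := v)"
  have vn: "v \<notin> x ` {..<n}" using v AB by auto
  have 1: "\<forall>i<Suc n. x' i \<in> V" using xV v unfolding x'_def by (auto simp: less_Suc_eq)
  have 2: "inj_on x' {..<Suc n}" unfolding x'_def lessThan_Suc using xinj vn
    by (auto simp: inj_on_def)
  have edge: "E (x i) v \<longleftrightarrow> P i n" if "i < n" for i
  proof
    assume "E (x i) v"
    then have "E v (x i)" by (rule Esym)
    then have "x i \<notin> B" using v by auto
    then show "P i n" unfolding B_def using that by auto
  next
    assume "P i n"
    then have "x i \<in> A" unfolding A_def using that by auto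
    then show "E (x i) v" using v Esym by auto
  qed
  have 3: "\<forall>i<Suc n. \<forall>j<Suc n. E (x' i) (x' j) \<longleftrightarrow> P i j"
  proof (intro allI impI)
    fix i j assume "i < Suc n" "j < Suc n"
    then consider "i < n" "j < n" | "i < n" "j = n" | "i = n" "j < n" | "i = n" "j = n"
      by linarith
    then show "E (x' i) (x' j) \<longleftrightarrow> P i j"
    proof cases
      case 1 then show ?thesis using xE unfolding x'_def by auto
    next
      case 2 then show ?thesis using edge unfolding x'_def by auto
    next
      case 3
      then have "j < N" using nN by auto
      then have "P j n = P n j" using Psym nN by auto
      moreover have "E (x j) v = E v (x j)" using Esym by blast
      ultimately show ?thesis using edge[OF \<open>j < n\<close>] 3 unfolding x'_def by auto
    next
      case 4 then show ?thesis using Eirr Pirr nN unfolding x'_def by auto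
    qed
  qed
  show ?case using 1 2 3 by blast
qed

definition indepI :: "('a \<Rightarrow> 'a \<Rightarrow> bool) \<Rightarrow> (nat \<Rightarrow> 'a) \<Rightarrow> nat set \<Rightarrow> bool" where
  "indepI E x S \<longleftrightarrow> (\<forall>j\<in>S. \<forall>k\<in>S. \<not> E (x j) (x k))"

definition Pk :: "('a \<Rightarrow> 'a \<Rightarrow> bool) \<Rightarrow> (nat \<Rightarrow> 'a) \<Rightarrow> nat \<Rightarrow> nat \<Rightarrow> bool" where
  "Pk E x n k \<longleftrightarrow> (\<forall>I. finite I \<and> card I \<ge> n \<longrightarrow> (\<exists>S\<subseteq>I. indepI E x S \<and> card S \<ge> k))"

lemma Pk00: "Pk E x 0 0"
  unfolding Pk_def indepI_def by auto

lemma split_card: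
  fixes x :: "nat \<Rightarrow> 'a" and I :: "nat set"
  assumes Eirr: "\<forall>u. \<not> E u u" and fin: "finite I" and i: "i \<in> I"
  shows "card I = 1 + card {j\<in>I. E (x i) (x j)} + card {j\<in>I. j \<noteq> i \<and> \<not> E (x i) (x j)}"
proof -
  have e: "I = insert i ({j\<in>I. E (x i) (x j)} \<union> {j\<in>I. j \<noteq> i \<and> \<not> E (x i) (x j)})"
    using i by auto
  have n: "i \<notin> {j\<in>I. E (x i) (x j)} \<union> {j\<in>I. j \<noteq> i \<and> \<not> E (x i) (x j)}"
    using Eirr by auto
  have d: "{j\<in>I. E (x i) (x j)} \<inter> {j\<in>I. j \<noteq> i \<and> \<not> E (x i) (x j)} = {}" by auto
  have f: "finite {j\<in>I. E (x i) (x j)}" "finite {j\<in>I. j \<noteq> i \<and> \<not> E (x i) (x j)}" using fin by auto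
  have "card I = Suc (card ({j\<in>I. E (x i) (x j)} \<union> {j\<in>I. j \<noteq> i \<and> \<not> E (x i) (x j)}))"
    by (subst e, rule card_insert_disjoint) (use f n in auto)
  also have "\<dots> = Suc (card {j\<in>I. E (x i) (x j)} + card {j\<in>I. j \<noteq> i \<and> \<not> E (x i) (x j)})"
    using card_Un_disjoint[OF f d] by simp
  finally show ?thesis by simp
qed

lemma nbr_indep:
  assumes Etri: "\<forall>a b c. \<not> (E a b \<and> E b c \<and> E a c)"
  shows "indepI E x {j\<in>I. E (x i) (x j)}"
  unfolding indepI_def using Etri by blast

lemma insert_indep:
  assumes Esym: "\<forall>u w. E u w \<longrightarrow> E w u" and Eirr: "\<forall>u. \<not> E u u"
    and S: "S \<subseteq> {j\<in>I. j \<noteq> i \<and> \<not> E (x i) (x j)}" and ind: "indepI E x S"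
  shows "indepI E x (insert i S)"
  using assms unfolding indepI_def by blast

lemma Pk_rec:
  assumes Esym: "\<forall>u w. E u w \<longrightarrow> E w u" and Eirr: "\<forall>u. \<not> E u u"
    and Etri: "\<forall>a b c. \<not> (E a b \<and> E b c \<and> E a c)"
    and P: "Pk E x a b" and ad: "a + d \<le> n" and n1: "1 \<le> n"
  shows "Pk E x n (min d (b+1))"
  unfolding Pk_def
proof (intro allI impI)
  fix I :: "nat set" assume "finite I \<and> n \<le> card I"
  then have fin: "finite I" and cI: "n \<le> card I" by auto
  then have "I \<noteq> {}" using n1 by auto
  then obtain i where i: "i \<in> I" by auto
  define N where "N = {j\<in>I. E (x i) (x j)}"
  define R where "R = {j\<in>I. j \<noteq> i \<and> \<not> E (x i) (x j)}"
  have cs: "card I = 1 + card N + card R" unfolding N_def R_def by (rule split_card[where x=x and E=E, OF Eirr fin i])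
  show "\<exists>S\<subseteq>I. indepI E x S \<and> min d (b + 1) \<le> card S"
  proof (cases "card N \<ge> d")
    case True
    have "indepI E x N" unfolding N_def by (rule nbr_indep[OF Etri])
    moreover have "N \<subseteq> I" unfolding N_def by auto
    ultimately show ?thesis using True by (meson min.coboundedI1 order_trans)
  next
    case False
    then have "card R \<ge> a" using cs cI ad by linarith
    moreover have "finite R" unfolding R_def using fin by auto
    ultimately obtain S where S: "S \<subseteq> R" "indepI E x S" "card S \<ge> b"
      using P unfolding Pk_def by blast
    have "indepI E x (insert i S)" using insert_indep[OF Esym Eirr _ S(2)] S(1) unfolding R_def by blast
    moreover have "i \<notin> S" using S(1) unfolding R_def by auto
    moreover have "finite S" using S(1) \<open>finite R\<close> finite_subset by auto
    moreover have "insert i S \<subseteq> I" using S(1) i unfolding R_def by auto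
    ultimately show ?thesis using S(3) by (intro exI[of _ "insert i S"]) auto
  qed
qed

lemma even_pairs:
  fixes x :: "nat \<Rightarrow> 'a" and J :: "nat set"
  assumes fin: "finite J" and Esym: "\<forall>u w. E u w \<longrightarrow> E w u" and Eirr: "\<forall>u. \<not> E u u"
  shows "even (card {(i,j)\<in>J\<times>J. E (x i) (x j)})"
proof -
  define L where "L = {(i,j)\<in>J\<times>J. E (x i) (x j) \<and> i < j}"
  define U where "U = {(i,j)\<in>J\<times>J. E (x i) (x j) \<and> j < i}"
  have eq: "{(i,j)\<in>J\<times>J. E (x i) (x j)} = L \<union> U"
    unfolding L_def U_def using Eirr by (auto, metis linorder_neqE_nat)
  have fL: "finite L" "finite U" unfolding L_def U_def using fin
    by (auto intro: finite_subset[of _ "J\<times>J"])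
  have d: "L \<inter> U = {}" unfolding L_def U_def by auto
  have "bij_betw (\<lambda>(i,j). (j,i)) L U"
    unfolding bij_betw_def inj_on_def L_def U_def using Esym by (auto simp: image_def)
  then have "card L = card U" by (rule bij_betw_same_card)
  then show ?thesis using eq card_Un_disjoint[OF fL d] by simp
qed

lemma Pk94:
  assumes Esym: "\<forall>u w. E u w \<longrightarrow> E w u" and Eirr: "\<forall>u. \<not> E u u"
    and Etri: "\<forall>a b c. \<not> (E a b \<and> E b c \<and> E a c)"
    and P6: "Pk E x 6 3"
  shows "Pk E x 9 4"
  unfolding Pk_def
proof (intro allI impI)
  fix I :: "nat set" assume "finite I \<and> 9 \<le> card I"
  then have fin: "finite I" and cI: "9 \<le> card I" by auto
  show "\<exists>S\<subseteq>I. indepI E x S \<and> 4 \<le> card S"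
  proof (rule ccontr)
    assume no: "\<not> ?thesis"
    obtain J where J: "J \<subseteq> I" "card J = 9" using cI obtain_subset_with_card_n by metis
    have fJ: "finite J" using J fin finite_subset by auto
    have deg: "card {j\<in>J. E (x i) (x j)} = 3" if i: "i \<in> J" for i
    proof -
      define N where "N = {j\<in>J. E (x i) (x j)}"
      define R where "R = {j\<in>J. j \<noteq> i \<and> \<not> E (x i) (x j)}"
      have cs: "card J = 1 + card N + card R" unfolding N_def R_def by (rule split_card[where x=x and E=E, OF Eirr fJ i])
      have "indepI E x N" unfolding N_def by (rule nbr_indep[OF Etri])
      moreover have "N \<subseteq> I" unfolding N_def using J by auto
      ultimately have c1: "card N \<le> 3" using no by fastforce
      have c2: "card R \<le> 5"
      proof (rule ccontr)
        assume "\<not> card R \<le> 5"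
        then have "card R \<ge> 6" by simp
        moreover have "finite R" unfolding R_def using fJ by auto
        ultimately obtain S where S: "S \<subseteq> R" "indepI E x S" "card S \<ge> 3"
          using P6 unfolding Pk_def by blast
        have "indepI E x (insert i S)" using insert_indep[OF Esym Eirr _ S(2)] S(1) unfolding R_def by blast
        moreover have "i \<notin> S" using S(1) unfolding R_def by auto
        moreover have "finite S" using S(1) \<open>finite R\<close> finite_subset by auto
        moreover have "insert i S \<subseteq> I" using S(1) i J unfolding R_def by auto
        ultimately show False using S(3) no by fastforce
      qed
      show ?thesis using c1 c2 cs J(2) unfolding N_def by linarith
    qed
    have "card {(i,j)\<in>J\<times>J. E (x i) (x j)} = card (SIGMA i:J. {j\<in>J. E (x i) (x j)})"
      by (rule arg_cong[where f=card]) auto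
    also have "\<dots> = (\<Sum>i\<in>J. card {j\<in>J. E (x i) (x j)})"
      using fJ by (intro card_SigmaI) auto
    also have "\<dots> = (\<Sum>i\<in>J. 3)" using deg by simp
    also have "\<dots> = 27" using J(2) by simp
    finally have "card {(i,j)\<in>J\<times>J. E (x i) (x j)} = 27" .
    with even_pairs[OF fJ Esym Eirr, of x] show False by simp
  qed
qed

theorem theorem5p3:
  fixes V :: "'a set" and E :: "'a \<Rightarrow> 'a \<Rightarrow> bool"
  assumes "is_henson_U3 V E"
  shows "property_D 3 V E \<and> \<not> property_D 4 V E"
proof
  have sg: "simple_graph V E" and tf: "triangle_free V E" and ext: "henson_extension V E"
    using assms unfolding is_henson_U3_def by auto
  have Esym: "\<forall>u w. E u w \<longrightarrow> E w u" and Eirr: "\<forall>u. \<not> E u u"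
    and EV: "\<forall>u w. E u w \<longrightarrow> u \<in> V \<and> w \<in> V"
    using sg unfolding simple_graph_def by auto
  have Etri: "\<forall>a b c. \<not> (E a b \<and> E b c \<and> E a c)"
    using tf EV unfolding triangle_free_def by blast
  show "property_D 3 V E"
    unfolding property_D_def
  proof (intro ballI allI impI)
    fix m and x :: "nat \<Rightarrow> 'a" assume m: "m \<in> {1..3}" and xV: "\<forall>i\<in>{1..3*m}. x i \<in> V"
    have e1: "(0::nat)+1 = 1" "(1::nat)+1 = 2" "(2::nat)+1 = 3" by simp_all
    have "Pk E x 1 (min 1 (0+1))" by (rule Pk_rec[OF Esym Eirr Etri Pk00]) simp_all
    then have P11: "Pk E x 1 1" unfolding e1 min.idem .
    have "Pk E x 3 (min 2 (1+1))" by (rule Pk_rec[OF Esym Eirr Etri P11]) simp_all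
    then have P32: "Pk E x 3 2" unfolding e1 min.idem .
    have "Pk E x 6 (min 3 (2+1))" by (rule Pk_rec[OF Esym Eirr Etri P32]) simp_all
    then have P63: "Pk E x 6 3" unfolding e1 min.idem .
    have P94: "Pk E x 9 4" by (rule Pk94[OF Esym Eirr Etri P63])
    have m3: "m = 1 \<or> m = 2 \<or> m = 3" using m by auto
    have "Pk E x (3*m) (m+1)" using m3 P32 P63 P94 by (auto simp: eval_nat_numeral)
    moreover have "card {1..3*m} = 3*m" by simp
    ultimately obtain S where S: "S \<subseteq> {1..3*m}" "indepI E x S" "card S \<ge> m+1"
      unfolding Pk_def by (metis finite_atLeastAtMost order_refl)
    have "finite (x ` S)" using S(1) finite_subset by auto
    moreover have "x ` S \<subseteq> V" using S(1) xV by auto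
    moreover have "independent_set E (x ` S)" using S(2) unfolding indepI_def independent_set_def by auto
    ultimately obtain v where v: "v \<in> V" "\<forall>a\<in>x ` S. E v a"
      using ext unfolding henson_extension_def
      by (metis empty_subsetI finite.emptyI inf_bot_right)
    have "S \<subseteq> {i\<in>{1..3*m}. E (x i) v}" using S(1) v(2) Esym by auto
    then have "card S \<le> card {i\<in>{1..3*m}. E (x i) v}" by (intro card_mono) auto
    then show "\<exists>y\<in>V. m + 1 \<le> card {i\<in>{1..3*m}. E (x i) y}" using v(1) S(3) by (meson order_trans)
  qed
  show "\<not> property_D 4 V E"
  proof
    assume D4: "property_D 4 V E"
    obtain x where xV: "\<forall>i<13. x i \<in> V" and xE: "\<forall>i<13. \<forall>j<13. E (x i) (x j) \<longleftrightarrow> P13 i j"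
      using embed[OF sg ext P_sym P_irr P_tri, of 13] by auto
    have "\<forall>i\<in>{1..3*4}. x i \<in> V" using xV by auto
    moreover have "(4::nat) \<in> {1..4}" by simp
    ultimately obtain y where y: "y \<in> V" "card {i\<in>{1..3*4}. E (x i) y} \<ge> 4 + 1"
      using D4 unfolding property_D_def by blast
    define S where "S = {i\<in>{1..3*4}. E (x i) y}"
    have Sb: "\<forall>i\<in>S. i < 13" unfolding S_def by auto
    have Sind: "\<forall>i\<in>S. \<forall>j\<in>S. \<not> P13 i j"
    proof (intro ballI notI)
      fix i j assume "i \<in> S" "j \<in> S" "P13 i j"
      then have "E (x i) (x j)" "E (x j) y" "E (x i) y" using xE Sb unfolding S_def by auto
      then show False using Etri by blast
    qed
    have "card S \<ge> 5" using y(2) unfolding S_def by simp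
    then obtain T where T: "T \<subseteq> S" "card T = 5" using obtain_subset_with_card_n by metis
    have fT: "finite T" using T(2) by (intro card_ge_0_finite) simp
    define l where "l = sorted_list_of_set T"
    have ll: "length l = 5" "set l = T" "sorted_wrt (<) l" unfolding l_def using T fT by auto
    have lT: "\<forall>k<5. l ! k \<in> T" using ll by auto
    have lt: "\<And>a b. a < b \<Longrightarrow> b < 5 \<Longrightarrow> l ! a < l ! b"
      using ll(3) ll(1) by (simp add: sorted_wrt_iff_nth_less)
    have bnd: "\<forall>k<5. l ! k < 13" using lT T(1) Sb by auto
    have np: "\<forall>a<5. \<forall>b<5. \<not> P13 (l ! a) (l ! b)" using lT T(1) Sind by blast
    have b: "l!0 < 13" "l!1 < 13" "l!2 < 13" "l!3 < 13" "l!4 < 13" using bnd by auto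
    have o: "l!0 < l!1" "l!1 < l!2" "l!2 < l!3" "l!3 < l!4" using lt by auto
    have q: "\<not> P13 (l!0) (l!1)" "\<not> P13 (l!0) (l!2)" "\<not> P13 (l!0) (l!3)" "\<not> P13 (l!0) (l!4)" "\<not> P13 (l!1) (l!2)" "\<not> P13 (l!1) (l!3)" "\<not> P13 (l!1) (l!4)" "\<not> P13 (l!2) (l!3)" "\<not> P13 (l!2) (l!4)" "\<not> P13 (l!3) (l!4)"
      by (simp_all add: np[rule_format])
    show False by (rule P_alpha[OF o(1-4) b(5) q])
  qed
qed

end
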